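(* Let $H$ and $G$ be Abelian groups that are isotyped (with respect to the variety of Abelian groups), and suppose one of them is free and finitely generated. Then $H$ and $G$ are isomorphic.
   Context: Let $\Theta$ be the variety of Abelian groups. $X^0=\{x_1,x_2,\dots\}$ is an infinite set of variables; for finite $X\subset X^0$, $W(X)$ is the free $\Theta$-algebra on $X$; homomorphisms $W(X)\to H$ are points. For each finite $X$, the set $\Phi(X)$ of formulas of sort $X$ is defined inductively: equalities $w\equiv w'$ ($w,w'\in W(X)$) are in $\Phi(X)$; $\Phi(X)$ is closed under $\neg,\vee,\wedge$ and $\exists x$ for $x\in X$; and for each homomorphism $s:W(X)\to W(Y)$ and $u\in\Phi(X)$, $s_*u\in\Phi(Y)$. Values $Val^X_H(u)\subseteq\mathrm{Hom}(W(X),H)$: $Val^X_H(w\equiv w')=\{\mu:\mu(w)=\mu(w')\}$; $\mu\in Val^X_H(\exists x\,u)$ iff some point $\nu$ agreeing with $\mu$ on $X\setminus\{x\}$ lies in $Val^X_H(u)$; $\vee,\wedge,\neg$ are union, intersection, complement; $\mu\in Val^Y_H(s_*u)$ iff $\mu\circ s\in Val^X_H(u)$. The logical kernel of $\mu:W(X)\to H$ is $LKer(\mu)=\{u\in\Phi(X):\mu\in Val^X_H(u)\}$; a set $T\subseteq\Phi(X)$ is an $X$-type of $H$ if $T=LKer(\mu)$ for some point $\mu:W(X)\to H$. Algebras $H_1,H_2\in\Theta$ are isotyped if for every finite $X\subset X^0$, every $X$-type of $H_1$ is an $X$-type of $H_2$ and vice versa. *)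

theory Defs
  imports "HOL-Algebra.Free_Abelian_Groups"
begin

(* Variables are natural numbers (x_i = i). For a finite set X of variables,
  W(X) is the free Abelian group on X. Elements of W(X) live in type nat \<Rightarrow>_0 int. *)

abbreviation W :: "nat set \<Rightarrow> (nat \<Rightarrow>\<^sub>0 int) monoid" where
  "W X \<equiv> free_Abelian_group X"

(* Raw formula syntax. Subst X s u stands for s_* u where u has sort X and
  s is a homomorphism W(X) \<rightarrow> W(Y). *)

datatype fm =
    Eq "nat \<Rightarrow>\<^sub>0 int" "nat \<Rightarrow>\<^sub>0 int"
  | Neg fm
  | Disj fm fm
  | Conj fm fm
  | Ex nat fm
  | Subst "nat set" "(nat \<Rightarrow>\<^sub>0 int) \<Rightarrow> (nat \<Rightarrow>\<^sub>0 int)" fm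

inductive wf :: "nat set \<Rightarrow> fm \<Rightarrow> bool" where
  wf_Eq: "w \<in> carrier (W X) \<Longrightarrow> w' \<in> carrier (W X) \<Longrightarrow> wf X (Eq w w')"
| wf_Neg: "wf X u \<Longrightarrow> wf X (Neg u)"
| wf_Disj: "wf X u \<Longrightarrow> wf X v \<Longrightarrow> wf X (Disj u v)"
| wf_Conj: "wf X u \<Longrightarrow> wf X v \<Longrightarrow> wf X (Conj u v)"
| wf_Ex: "x \<in> X \<Longrightarrow> wf X u \<Longrightarrow> wf X (Ex x u)"
| wf_Subst: "finite X \<Longrightarrow> s \<in> hom (W X) (W Y) \<Longrightarrow> wf X u \<Longrightarrow> wf Y (Subst X s u)"

primrec sat :: "('a, 'b) monoid_scheme \<Rightarrow> nat set \<Rightarrow> fm \<Rightarrow> ((nat \<Rightarrow>\<^sub>0 int) \<Rightarrow> 'a) \<Rightarrow> bool" where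
  "sat H X (Eq w w') \<mu> = (\<mu> w = \<mu> w')"
| "sat H X (Neg u) \<mu> = (\<not> sat H X u \<mu>)"
| "sat H X (Disj u v) \<mu> = (sat H X u \<mu> \<or> sat H X v \<mu>)"
| "sat H X (Conj u v) \<mu> = (sat H X u \<mu> \<and> sat H X v \<mu>)"
| "sat H X (Ex x u) \<mu> =
     (\<exists>\<nu> \<in> hom (W X) H. (\<forall>y \<in> X - {x}. \<nu> (frag_of y) = \<mu> (frag_of y)) \<and> sat H X u \<nu>)"
| "sat H X (Subst Z s u) \<mu> = sat H Z u (\<mu> \<circ> s)"

definition Val :: "('a, 'b) monoid_scheme \<Rightarrow> nat set \<Rightarrow> fm \<Rightarrow> ((nat \<Rightarrow>\<^sub>0 int) \<Rightarrow> 'a) set" where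
  "Val H X u = {\<mu> \<in> hom (W X) H. sat H X u \<mu>}"

definition LKer :: "('a, 'b) monoid_scheme \<Rightarrow> nat set \<Rightarrow> ((nat \<Rightarrow>\<^sub>0 int) \<Rightarrow> 'a) \<Rightarrow> fm set" where
  "LKer H X \<mu> = {u. wf X u \<and> \<mu> \<in> Val H X u}"

definition is_type :: "('a, 'b) monoid_scheme \<Rightarrow> nat set \<Rightarrow> fm set \<Rightarrow> bool" where
  "is_type H X T \<longleftrightarrow> (\<exists>\<mu> \<in> hom (W X) H. T = LKer H X \<mu>)"

definition isotyped :: "('a, 'b) monoid_scheme \<Rightarrow> ('c, 'd) monoid_scheme \<Rightarrow> bool" where
  "isotyped H G \<longleftrightarrow> (\<forall>X. finite X \<longrightarrow> (\<forall>T. is_type H X T \<longleftrightarrow> is_type G X T))"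

definition free_fg :: "('a, 'b) monoid_scheme \<Rightarrow> bool" where
  "free_fg H \<longleftrightarrow> (\<exists>S :: nat set. finite S \<and> H \<cong> free_Abelian_group S)"

end

theory Submission
  imports Defs
begin


lemma hom_frag_0:
  assumes "h \<in> hom (free_Abelian_group S) (free_Abelian_group T)"
  shows "h 0 = 0"
  using hom_one[OF assms] by simp

lemma hom_frag_cmul:
  assumes "h \<in> hom (free_Abelian_group S) (free_Abelian_group T)" "Poly_Mapping.keys a \<subseteq> S"
  shows "h (frag_cmul c a) = frag_cmul c (h a)"
proof -
  have k: "Poly_Mapping.keys (h a) \<subseteq> T"
    by (meson assms carrier_free_Abelian_group_iff hom_in_carrier)
  have "h (a [^]\<^bsub>free_Abelian_group S\<^esub> c) = h a [^]\<^bsub>free_Abelian_group T\<^esub> c"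
    using hom_int_pow[OF assms(1)] assms(2) by simp
  then show ?thesis using assms(2) k by simp
qed

lemma lookup_hom_diff:
  assumes "h \<in> hom (free_Abelian_group S) (free_Abelian_group T)" "Poly_Mapping.keys a \<subseteq> S" "Poly_Mapping.keys b \<subseteq> S"
  shows "poly_mapping.lookup (h (a-b)) s = poly_mapping.lookup (h a) s - poly_mapping.lookup (h b) s"
  using hom_frag_diff[OF assms] by (simp add: lookup_minus)

lemma no_inj_hom:
  fixes S :: "nat set"
  assumes "finite S"
  shows "\<And>X \<psi>. finite X \<Longrightarrow> card S < card X \<Longrightarrow> \<psi> \<in> hom (W X) (W S) \<Longrightarrow>
            \<exists>w. Poly_Mapping.keys w \<subseteq> X \<and> w \<noteq> 0 \<and> \<psi> w = 0"
  using assms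
proof (induction S rule: finite_induct)
  case empty
  then obtain x where x: "x \<in> X" by (metis card.empty card_gt_0_iff ex_in_conv)
  have "\<psi> (frag_of x) \<in> carrier (W {})"
    using hom_in_carrier[OF empty(3)] x by simp
  then have "\<psi> (frag_of x) = 0" by simp
  then show ?case using x by (intro exI[of _ "frag_of x"]) (simp add: keys_frag_of)
next
  case (insert s S0)
  define c where "c w = poly_mapping.lookup (\<psi> w) s" for w
  have kS: "Poly_Mapping.keys (\<psi> w) \<subseteq> insert s S0" if "Poly_Mapping.keys w \<subseteq> X" for w
    using hom_in_carrier[OF insert(6)] that by simp
  show ?case
  proof (cases "\<forall>x\<in>X. c (frag_of x) = 0")
    case True
    have c0: "c w = 0" if "Poly_Mapping.keys w \<subseteq> X" for w
      apply (rule free_Abelian_group_induct[where P="\<lambda>w. c w = 0", OF that])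
      subgoal using hom_frag_0[OF insert(6)] by (simp add: c_def)
      subgoal for x y using lookup_hom_diff[OF insert(6), of x y s] by (simp add: c_def)
      subgoal using True by simp
      done
    have "\<psi> \<in> hom (W X) (W S0)"
    proof (rule homI)
      fix w assume "w \<in> carrier (W X)"
      then have "Poly_Mapping.keys w \<subseteq> X" by simp
      moreover have "s \<notin> Poly_Mapping.keys (\<psi> w)"
        using c0[OF \<open>Poly_Mapping.keys w \<subseteq> X\<close>] by (simp add: c_def in_keys_iff)
      ultimately have "Poly_Mapping.keys (\<psi> w) \<subseteq> S0"
        using kS by blast
      then show "\<psi> w \<in> carrier (W S0)" by simp
    next
      fix x y assume "x \<in> carrier (W X)" "y \<in> carrier (W X)"
      then show "\<psi> (x \<otimes>\<^bsub>W X\<^esub> y) = \<psi> x \<otimes>\<^bsub>W S0\<^esub> \<psi> y"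
        using hom_frag_add[OF insert(6)] by simp
    qed
    then show ?thesis using insert by simp
  next
    case False
    then obtain x0 where x0: "x0 \<in> X" "c (frag_of x0) \<noteq> 0" by blast
    define c0 where "c0 = c (frag_of x0)"
    define X0 where "X0 = X - {x0}"
    define \<theta> where "\<theta> w = frag_cmul c0 w - frag_cmul (c w) (frag_of x0)" for w
    have X0X: "X0 \<subseteq> X" by (auto simp: X0_def)
    have card0: "card S0 < card X0"
      using insert x0 by (simp add: X0_def)
    have kth: "Poly_Mapping.keys (\<theta> w) \<subseteq> X" if "Poly_Mapping.keys w \<subseteq> X" for w
    proof -
      have "Poly_Mapping.keys (\<theta> w) \<subseteq> Poly_Mapping.keys (frag_cmul c0 w) \<union> Poly_Mapping.keys (frag_cmul (c w) (frag_of x0))"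
        unfolding \<theta>_def by (rule keys_diff)
      also have "\<dots> \<subseteq> X" using that x0 keys_cmul[of c0 w] keys_cmul[of "c w" "frag_of x0"]
        by (auto simp: keys_frag_of)
      finally show ?thesis .
    qed
    have cadd: "c (a + b) = c a + c b" if "Poly_Mapping.keys a \<subseteq> X" "Poly_Mapping.keys b \<subseteq> X" for a b
      using hom_frag_add[OF insert(6) that] by (simp add: c_def lookup_add)
    have psith: "\<psi> (\<theta> w) = frag_cmul c0 (\<psi> w) - frag_cmul (c w) (\<psi> (frag_of x0))"
      if "Poly_Mapping.keys w \<subseteq> X" for w
    proof -
      have "\<psi> (\<theta> w) = \<psi> (frag_cmul c0 w) - \<psi> (frag_cmul (c w) (frag_of x0))"
        unfolding \<theta>_def
        proof (rule hom_frag_diff[OF insert(6)])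
        show "Poly_Mapping.keys (frag_cmul c0 w) \<subseteq> X" using that keys_cmul[of c0 w] by blast
        show "Poly_Mapping.keys (frag_cmul (c w) (frag_of x0)) \<subseteq> X"
          using x0 keys_cmul[of "c w" "frag_of x0"] by (auto simp: keys_frag_of)
      qed
      then show ?thesis using hom_frag_cmul[OF insert(6)] that x0 by (simp add: keys_frag_of)
    qed
    have thadd: "\<theta> (a + b) = \<theta> a + \<theta> b" if "Poly_Mapping.keys a \<subseteq> X" "Poly_Mapping.keys b \<subseteq> X" for a b
      using cadd[OF that] by (simp add: \<theta>_def frag_cmul_distrib2 frag_cmul_distrib algebra_simps)
    have hth: "\<psi> \<circ> \<theta> \<in> hom (W X0) (W S0)"
    proof (rule homI)
      fix w assume "w \<in> carrier (W X0)"
      then have w: "Poly_Mapping.keys w \<subseteq> X" using X0X by auto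
      have "Poly_Mapping.keys (\<psi> (\<theta> w)) \<subseteq> insert s S0" using kS kth w by blast
      moreover have "poly_mapping.lookup (\<psi> (\<theta> w)) s = 0"
        using psith[OF w] unfolding c0_def c_def by (simp add: lookup_minus)
      then have "s \<notin> Poly_Mapping.keys (\<psi> (\<theta> w))" by (simp add: in_keys_iff)
      ultimately have "Poly_Mapping.keys (\<psi> (\<theta> w)) \<subseteq> S0"
        by blast
      then show "(\<psi> \<circ> \<theta>) w \<in> carrier (W S0)" by simp
    next
      fix x y assume "x \<in> carrier (W X0)" "y \<in> carrier (W X0)"
      then have xy: "Poly_Mapping.keys x \<subseteq> X" "Poly_Mapping.keys y \<subseteq> X" using X0X by auto
      show "(\<psi> \<circ> \<theta>) (x \<otimes>\<^bsub>W X0\<^esub> y) = (\<psi> \<circ> \<theta>) x \<otimes>\<^bsub>W S0\<^esub> (\<psi> \<circ> \<theta>) y"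
        using thadd[OF xy] hom_frag_add[OF insert(6) kth[OF xy(1)] kth[OF xy(2)]] by simp
    qed
    have fX0: "finite X0" using insert by (simp add: X0_def)
    obtain w0 where w0: "Poly_Mapping.keys w0 \<subseteq> X0" "w0 \<noteq> 0" "(\<psi> \<circ> \<theta>) w0 = 0"
      using insert.IH[OF fX0 card0 hth] by blast
    then obtain x where x: "x \<in> Poly_Mapping.keys w0" by (metis ex_in_conv keys_eq_empty)
    then have "x \<noteq> x0" using w0 by (auto simp: X0_def)
    then have "poly_mapping.lookup (\<theta> w0) x = c0 * poly_mapping.lookup w0 x"
      by (simp add: \<theta>_def lookup_minus)
    moreover have "c0 \<noteq> 0" using x0 c0_def by simp
    ultimately have "poly_mapping.lookup (\<theta> w0) x \<noteq> 0" using x by (simp add: in_keys_iff)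
    then have "\<theta> w0 \<noteq> 0" by auto
    then show ?thesis using kth w0 X0X by (metis comp_apply subset_trans)
  qed
qed



lemma hom_W_diff:
  assumes K: "group K" and f: "f \<in> hom (W X) K"
    and x: "Poly_Mapping.keys x \<subseteq> X" and y: "Poly_Mapping.keys y \<subseteq> X"
  shows "f (x - y) = f x \<otimes>\<^bsub>K\<^esub> inv\<^bsub>K\<^esub> (f y)"
proof -
  interpret gh: group_hom "W X" K f
    using K f by (simp add: group_hom_def group_hom_axioms_def)
  have e: "x - y = x \<otimes>\<^bsub>W X\<^esub> inv\<^bsub>W X\<^esub> y"
    using y by simp
  have yc: "y \<in> carrier (W X)" "x \<in> carrier (W X)" using x y by simp_all
  have "f (x - y) = f (x \<otimes>\<^bsub>W X\<^esub> inv\<^bsub>W X\<^esub> y)" using e by (rule arg_cong)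
  also have "\<dots> = f x \<otimes>\<^bsub>K\<^esub> f (inv\<^bsub>W X\<^esub> y)"
    by (rule gh.hom_mult) (use yc in auto)
  also have "f (inv\<^bsub>W X\<^esub> y) = inv\<^bsub>K\<^esub> (f y)" by (rule gh.hom_inv) (rule yc)
  finally show ?thesis .
qed

lemma hom_W_cmul:
  assumes K: "group K" and f: "f \<in> hom (W X) K" and x: "Poly_Mapping.keys x \<subseteq> X"
  shows "f (frag_cmul d x) = f x [^]\<^bsub>K\<^esub> d"
proof -
  have xc: "x \<in> carrier (W X)" using x by simp
  have 1: "f (x [^]\<^bsub>W X\<^esub> d) = f x [^]\<^bsub>K\<^esub> d"
    by (rule hom_int_pow[OF f xc group_free_Abelian_group K])
  have 2: "x [^]\<^bsub>W X\<^esub> d = frag_cmul d x"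
    by (rule int_pow_free_Abelian_group[OF x])
  show ?thesis using 1 unfolding 2 .
qed

lemma hom_W_zero:
  assumes K: "group K" and f: "f \<in> hom (W X) K"
  shows "f 0 = \<one>\<^bsub>K\<^esub>"
  using hom_one[OF f group_free_Abelian_group K] by simp

lemma hom_W_agree:
  assumes K: "group K" and f: "f \<in> hom (W X) K" and g: "g \<in> hom (W Y) K"
    and ZX: "Z \<subseteq> X" and ZY: "Z \<subseteq> Y"
    and eq: "\<And>y. y \<in> Z \<Longrightarrow> f (frag_of y) = g (frag_of y)"
    and w: "Poly_Mapping.keys w \<subseteq> Z"
  shows "f w = g w"
  apply (rule free_Abelian_group_induct[where P="\<lambda>w. f w = g w", OF w])
  subgoal using hom_W_zero[OF K f] hom_W_zero[OF K g] by simp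
  subgoal for x y
  proof -
    assume xy: "Poly_Mapping.keys x \<subseteq> Z" "Poly_Mapping.keys y \<subseteq> Z" "f x = g x" "f y = g y"
    have "f (x - y) = f x \<otimes>\<^bsub>K\<^esub> inv\<^bsub>K\<^esub> (f y)"
      using hom_W_diff[OF K f, of x y] ZX xy by blast
    also have "\<dots> = g (x - y)"
      using hom_W_diff[OF K g, of x y] ZY xy by simp
    finally show ?thesis .
  qed
  subgoal for a using eq by simp
  done

lemma sat_cong:
  assumes "wf X u"
  shows "\<And>m1 m2. (\<And>w. w \<in> carrier (W X) \<Longrightarrow> m1 w = m2 w) \<Longrightarrow> sat K X u m1 = sat K X u m2"
  using assms
proof (induction X u rule: wf.induct)
  case (wf_Ex x X u)
  have "\<And>y. y \<in> X - {x} \<Longrightarrow> m1 (frag_of y) = m2 (frag_of y)"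
    using wf_Ex.prems by (simp add: keys_frag_of)
  then show ?case by (simp only: sat.simps) (metis (no_types, lifting))
next
  case (wf_Subst X s Y u)
  have "\<And>w. w \<in> carrier (W X) \<Longrightarrow> (m1 \<circ> s) w = (m2 \<circ> s) w"
    using wf_Subst.prems hom_in_carrier[OF wf_Subst.hyps(2)] by simp
  then have "sat K X u (m1 \<circ> s) = sat K X u (m2 \<circ> s)" by (rule wf_Subst.IH)
  then show ?case by (simp only: sat.simps)
next
  case (wf_Eq w X w')
  then show ?case by simp
next
  case (wf_Neg X u)
  have "sat K X u m1 = sat K X u m2" by (rule wf_Neg.IH) (rule wf_Neg.prems)
  then show ?case by (simp only: sat.simps)
next
  case (wf_Disj X u v)
  have "sat K X u m1 = sat K X u m2" by (rule wf_Disj.IH) (rule wf_Disj.prems)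
  moreover have "sat K X v m1 = sat K X v m2" by (rule wf_Disj.IH) (rule wf_Disj.prems)
  ultimately show ?case by (simp only: sat.simps)
next
  case (wf_Conj X u v)
  have "sat K X u m1 = sat K X u m2" by (rule wf_Conj.IH) (rule wf_Conj.prems)
  moreover have "sat K X v m1 = sat K X v m2" by (rule wf_Conj.IH) (rule wf_Conj.prems)
  ultimately show ?case by (simp only: sat.simps)
qed

lemma LKer_iff: "u \<in> LKer K X m \<longleftrightarrow> wf X u \<and> m \<in> hom (W X) K \<and> sat K X u m"
  by (simp add: LKer_def Val_def)

lemma isotyped_sym: "isotyped H G \<Longrightarrow> isotyped G H"
  by (simp add: isotyped_def)

lemma transfer:
  assumes "isotyped H G" "finite X" "\<mu> \<in> hom (W X) H"
  obtains \<nu> where "\<nu> \<in> hom (W X) G" "LKer G X \<nu> = LKer H X \<mu>"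
proof -
  have "is_type H X (LKer H X \<mu>)" using assms by (auto simp: is_type_def)
  then have "is_type G X (LKer H X \<mu>)" using assms by (simp add: isotyped_def)
  then show ?thesis using that by (auto simp: is_type_def)
qed

lemma extend_hom:
  assumes "comm_group K" "\<And>x. x \<in> X \<Longrightarrow> f x \<in> carrier K"
  obtains h where "h \<in> hom (W X) K" "\<And>x. x \<in> X \<Longrightarrow> h (frag_of x) = f x"
  using comm_group.free_Abelian_group_universal[OF assms(1), of f X] assms(2) by blast



lemma main_free:
  assumes cH: "comm_group H" and cG: "comm_group G" and it: "isotyped H G" and fH: "free_fg H"
  shows "H \<cong> G"
proof -
  interpret Hg: comm_group H by (rule cH)
  interpret Gg: comm_group G by (rule cG)
  have gH: "group H" by (rule Hg.is_group)
  have gG: "group G" by (rule Gg.is_group)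
  have itG: "isotyped G H" by (rule isotyped_sym[OF it])
  obtain S :: "nat set" where S: "finite S" "H \<cong> W S" using fH free_fg_def by blast
  then obtain \<phi> where \<phi>: "\<phi> \<in> iso H (W S)" by (auto simp: is_iso_def)
  define \<mu> where "\<mu> = inv_into (carrier H) \<phi>"
  have \<mu>iso: "\<mu> \<in> iso (W S) H" unfolding \<mu>_def by (rule Hg.iso_set_sym[OF \<phi>])
  have \<mu>hom: "\<mu> \<in> hom (W S) H" and \<mu>surj: "\<mu> ` carrier (W S) = carrier H"
    and \<mu>inj: "inj_on \<mu> (carrier (W S))" using \<mu>iso by (auto simp: iso_iff)
  have \<phi>hom: "\<phi> \<in> hom H (W S)" and \<phi>inj: "inj_on \<phi> (carrier H)" using \<phi> by (auto simp: iso_iff)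
  have \<phi>1: "\<phi> \<one>\<^bsub>H\<^esub> = 0" using hom_one[OF \<phi>hom gH group_free_Abelian_group] by simp
  obtain \<nu> where \<nu>hom: "\<nu> \<in> hom (W S) G" and \<nu>T: "LKer G S \<nu> = LKer H S \<mu>"
    using transfer[OF it S(1) \<mu>hom] by blast

  have inj\<nu>: "w = w'" if w: "w \<in> carrier (W S)" "w' \<in> carrier (W S)" and e: "\<nu> w = \<nu> w'" for w w'
  proof -
    have "Eq w w' \<in> LKer G S \<nu>" unfolding LKer_iff using w e \<nu>hom by (auto intro: wf.intros)
    then have "Eq w w' \<in> LKer H S \<mu>" using \<nu>T by simp
    then have "\<mu> w = \<mu> w'" unfolding LKer_iff by simp
    then show ?thesis using \<mu>inj w by (meson inj_onD)
  qed

  have tfH: "h = \<one>\<^bsub>H\<^esub>" if h: "h \<in> carrier H" and d: "(d::int) \<noteq> 0" and e: "h [^]\<^bsub>H\<^esub> d = \<one>\<^bsub>H\<^esub>" for h d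
  proof -
    have c: "\<phi> h \<in> carrier (W S)" using hom_in_carrier[OF \<phi>hom h] .
    then have k: "Poly_Mapping.keys (\<phi> h) \<subseteq> S" by simp
    have "\<phi> (h [^]\<^bsub>H\<^esub> d) = \<phi> h [^]\<^bsub>W S\<^esub> d"
      by (rule hom_int_pow[OF \<phi>hom h gH group_free_Abelian_group])
    also have "\<dots> = frag_cmul d (\<phi> h)" by (rule int_pow_free_Abelian_group[OF k])
    finally have "frag_cmul d (\<phi> h) = 0" using e \<phi>1 by simp
    then have "\<phi> h = \<phi> \<one>\<^bsub>H\<^esub>" using d \<phi>1 by simp
    then show ?thesis using \<phi>inj h by (meson inj_onD Hg.one_closed)
  qed

  have tfG: "g = \<one>\<^bsub>G\<^esub>" if g: "g \<in> carrier G" and d: "(d::int) \<noteq> 0" and e: "g [^]\<^bsub>G\<^esub> d = \<one>\<^bsub>G\<^esub>" for g d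
  proof -
    obtain \<rho> where \<rho>: "\<rho> \<in> hom (W {0}) G" "\<And>x. x \<in> {0} \<Longrightarrow> \<rho> (frag_of x) = g"
      using extend_hom[OF cG, of "{0::nat}" "\<lambda>_. g"] g by blast
    obtain \<rho>' where \<rho>': "\<rho>' \<in> hom (W {0}) H" "LKer H {0} \<rho>' = LKer G {0} \<rho>"
      using transfer[OF itG _ \<rho>(1)] by blast
    have k0: "Poly_Mapping.keys (frag_of (0::nat)) \<subseteq> {0}" by (simp add: keys_frag_of)
    have kc: "Poly_Mapping.keys (frag_cmul d (frag_of (0::nat))) \<subseteq> {0}"
      using keys_cmul[of d "frag_of (0::nat)"] k0 by blast
    have "\<rho> (frag_cmul d (frag_of 0)) = \<rho> (frag_of 0) [^]\<^bsub>G\<^esub> d" by (rule hom_W_cmul[OF gG \<rho>(1) k0])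
    also have "\<dots> = \<one>\<^bsub>G\<^esub>" using \<rho>(2) e by simp
    also have "\<dots> = \<rho> 0" using hom_W_zero[OF gG \<rho>(1)] by simp
    finally have "Eq (frag_cmul d (frag_of 0)) 0 \<in> LKer G {0} \<rho>"
      unfolding LKer_iff using \<rho>(1) kc by (auto intro: wf.intros)
    then have "Eq (frag_cmul d (frag_of 0)) 0 \<in> LKer H {0} \<rho>'" using \<rho>'(2) by simp
    then have "\<rho>' (frag_cmul d (frag_of 0)) = \<rho>' 0" unfolding LKer_iff by simp
    then have "\<rho>' (frag_of 0) [^]\<^bsub>H\<^esub> d = \<one>\<^bsub>H\<^esub>"
      using hom_W_cmul[OF gH \<rho>'(1) k0] hom_W_zero[OF gH \<rho>'(1)] by simp
    moreover have "\<rho>' (frag_of 0) \<in> carrier H" using hom_in_carrier[OF \<rho>'(1)] by simp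
    ultimately have "\<rho>' (frag_of 0) = \<one>\<^bsub>H\<^esub>" using tfH d by blast
    then have "Eq (frag_of 0) 0 \<in> LKer H {0} \<rho>'"
      unfolding LKer_iff using \<rho>'(1) hom_W_zero[OF gH \<rho>'(1)] k0 by (auto intro: wf.intros)
    then have "Eq (frag_of 0) 0 \<in> LKer G {0} \<rho>" using \<rho>'(2) by simp
    then have "\<rho> (frag_of 0) = \<rho> 0" unfolding LKer_iff by simp
    then show ?thesis using \<rho>(2) hom_W_zero[OF gG \<rho>(1)] by simp
  qed

  have surj\<nu>: "\<exists>u\<in>carrier (W S). \<nu> u = g" if g: "g \<in> carrier G" for g
  proof -
    obtain a :: nat where a: "a \<notin> S" using S(1) ex_new_if_finite infinite_UNIV_nat by blast
    define X' where "X' = insert a S"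
    have fX': "finite X'" using S(1) by (simp add: X'_def)
    have SX': "S \<subseteq> X'" and aX': "a \<in> X'" by (auto simp: X'_def)
    have XS: "X' - {a} = S" using a by (auto simp: X'_def)
    have gen: "(if y = a then g else \<nu> (frag_of y)) \<in> carrier G" if "y \<in> X'" for y
      using that g hom_in_carrier[OF \<nu>hom] by (auto simp: X'_def)
    obtain \<nu>' where \<nu>'hom: "\<nu>' \<in> hom (W X') G"
      and \<nu>'gen: "\<And>y. y \<in> X' \<Longrightarrow> \<nu>' (frag_of y) = (if y = a then g else \<nu> (frag_of y))"
      using extend_hom[OF cG, of X' "\<lambda>y. if y = a then g else \<nu> (frag_of y)"] gen by blast
    have \<nu>'a: "\<nu>' (frag_of a) = g" using \<nu>'gen[OF aX'] by simp
    have \<nu>'S: "\<nu>' (frag_of y) = \<nu> (frag_of y)" if "y \<in> S" for y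
      using \<nu>'gen[of y] that a SX' by auto
    have agree: "\<nu>' w = \<nu> w" if "Poly_Mapping.keys w \<subseteq> S" for w
      by (rule hom_W_agree[OF gG \<nu>'hom \<nu>hom SX' subset_refl \<nu>'S that])
    obtain \<mu>' where \<mu>'hom: "\<mu>' \<in> hom (W X') H" and \<mu>'T: "LKer H X' \<mu>' = LKer G X' \<nu>'"
      using transfer[OF itG fX' \<nu>'hom] by blast
    have card: "card S < card X'" using a S(1) by (simp add: X'_def)
    obtain w where w: "Poly_Mapping.keys w \<subseteq> X'" "w \<noteq> 0" "(\<phi> \<circ> \<mu>') w = 0"
      using no_inj_hom[OF S(1) fX' card hom_compose[OF \<mu>'hom \<phi>hom]] by blast
    have "\<mu>' w \<in> carrier H" using hom_in_carrier[OF \<mu>'hom] w(1) by simp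
    then have "\<mu>' w = \<one>\<^bsub>H\<^esub>" using w(3) \<phi>1 \<phi>inj by (metis comp_apply inj_onD Hg.one_closed)
    then have "\<mu>' w = \<mu>' 0" using hom_W_zero[OF gH \<mu>'hom] by simp
    then have "Eq w 0 \<in> LKer H X' \<mu>'"
      unfolding LKer_iff using \<mu>'hom w(1) by (auto intro: wf.intros)
    then have "Eq w 0 \<in> LKer G X' \<nu>'" using \<mu>'T by simp
    then have \<nu>'w: "\<nu>' w = \<one>\<^bsub>G\<^esub>" unfolding LKer_iff using hom_W_zero[OF gG \<nu>'hom] by simp
    define d where "d = poly_mapping.lookup w a"
    define wS where "wS = w - frag_cmul d (frag_of a)"
    have kfa: "Poly_Mapping.keys (frag_cmul d (frag_of a)) \<subseteq> X'"
      using keys_cmul[of d "frag_of a"] aX' by (auto simp: keys_frag_of)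
    have kwS: "Poly_Mapping.keys wS \<subseteq> S"
    proof
      fix y assume y: "y \<in> Poly_Mapping.keys wS"
      have "y \<in> X'" using y keys_diff[of w "frag_cmul d (frag_of a)"] kfa w(1)
        unfolding wS_def by blast
      moreover have "poly_mapping.lookup wS a = 0" by (simp add: wS_def d_def lookup_minus)
      then have "y \<noteq> a" using y by (auto simp: in_keys_iff)
      ultimately show "y \<in> S" by (simp add: X'_def)
    qed
    have wdec: "w = frag_cmul d (frag_of a) + wS" by (simp add: wS_def)
    have "\<nu>' w = \<nu>' (frag_cmul d (frag_of a) \<otimes>\<^bsub>W X'\<^esub> wS)" using wdec by simp
    also have "\<dots> = \<nu>' (frag_cmul d (frag_of a)) \<otimes>\<^bsub>G\<^esub> \<nu>' wS"
      by (rule hom_mult[OF \<nu>'hom]) (use kfa kwS SX' in auto)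
    also have "\<nu>' (frag_cmul d (frag_of a)) = g [^]\<^bsub>G\<^esub> d"
      using hom_W_cmul[OF gG \<nu>'hom, of "frag_of a" d] aX' \<nu>'a by (simp add: keys_frag_of)
    also have "\<nu>' wS = \<nu> wS" by (rule agree[OF kwS])
    finally have star: "g [^]\<^bsub>G\<^esub> d \<otimes>\<^bsub>G\<^esub> \<nu> wS = \<one>\<^bsub>G\<^esub>" using \<nu>'w by simp
    have \<nu>wS: "\<nu> wS \<in> carrier G" using hom_in_carrier[OF \<nu>hom] kwS by simp
    have d0: "d \<noteq> 0"
    proof
      assume "d = 0"
      then have "\<nu> wS = \<nu> 0" using star \<nu>wS hom_W_zero[OF gG \<nu>hom] by simp
      then have "wS = 0" using inj\<nu> kwS by simp
      then show False using wdec w(2) \<open>d = 0\<close> by simp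
    qed
    define v where "v = - wS"
    have kv: "Poly_Mapping.keys v \<subseteq> S" using kwS by (simp add: v_def)
    have "\<nu> v = \<nu> (0 - wS)" by (simp add: v_def)
    also have "\<dots> = \<nu> 0 \<otimes>\<^bsub>G\<^esub> inv\<^bsub>G\<^esub> (\<nu> wS)" by (rule hom_W_diff[OF gG \<nu>hom]) (use kwS in auto)
    also have "\<dots> = inv\<^bsub>G\<^esub> (\<nu> wS)" using hom_W_zero[OF gG \<nu>hom] \<nu>wS by simp
    also have "\<dots> = g [^]\<^bsub>G\<^esub> d" by (rule Gg.inv_equality[OF star \<nu>wS]) (use g in simp)
    finally have \<nu>v: "\<nu> v = g [^]\<^bsub>G\<^esub> d" .
    have rgen: "(if y \<in> S then frag_of y else 0) \<in> carrier (W S)" for y by simp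
    obtain r where r: "r \<in> hom (W X') (W S)"
      and rgen: "\<And>y. y \<in> X' \<Longrightarrow> r (frag_of y) = (if y \<in> S then frag_of y else 0)"
      using extend_hom[OF abelian_free_Abelian_group, of X' "\<lambda>y. if y \<in> S then frag_of y else 0"] rgen
      by blast
    define \<psi> where "\<psi> = Ex a (Eq (frag_cmul d (frag_of a)) v)"
    define \<phi>S where "\<phi>S = Subst X' r \<psi>"
    have wf\<phi>: "wf S \<phi>S" unfolding \<phi>S_def \<psi>_def
      by (intro wf_Subst[OF fX' r] wf_Ex[OF aX'] wf_Eq) (use kfa kv SX' in auto)
    have "sat G S \<phi>S \<nu>"
    proof -
      have "\<forall>y\<in>X' - {a}. \<nu>' (frag_of y) = (\<nu> \<circ> r) (frag_of y)"
        using \<nu>'S rgen SX' XS by auto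
      moreover have "\<nu>' (frag_cmul d (frag_of a)) = \<nu>' v"
        using hom_W_cmul[OF gG \<nu>'hom, of "frag_of a" d] aX' \<nu>'a \<nu>v agree[OF kv] by (simp add: keys_frag_of)
      ultimately show ?thesis unfolding \<phi>S_def \<psi>_def using \<nu>'hom by auto
    qed
    then have "\<phi>S \<in> LKer G S \<nu>" unfolding LKer_iff using wf\<phi> \<nu>hom by simp
    then have "\<phi>S \<in> LKer H S \<mu>" using \<nu>T by simp
    then have "sat H S \<phi>S \<mu>" unfolding LKer_iff by simp
    then obtain \<rho> where \<rho>: "\<rho> \<in> hom (W X') H" "\<forall>y\<in>X' - {a}. \<rho> (frag_of y) = (\<mu> \<circ> r) (frag_of y)"
      "\<rho> (frag_cmul d (frag_of a)) = \<rho> v"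
      unfolding \<phi>S_def \<psi>_def by auto
    have \<rho>S: "\<rho> (frag_of y) = \<mu> (frag_of y)" if "y \<in> S" for y
      using \<rho>(2) rgen SX' XS that by auto
    have \<rho>v: "\<rho> v = \<mu> v" by (rule hom_W_agree[OF gH \<rho>(1) \<mu>hom SX' subset_refl \<rho>S kv])
    have "\<rho> (frag_of a) \<in> carrier H" using hom_in_carrier[OF \<rho>(1)] aX' by simp
    then have "\<rho> (frag_of a) \<in> \<mu> ` carrier (W S)" by (simp only: \<mu>surj)
    then obtain u where u: "u \<in> carrier (W S)" "\<mu> u = \<rho> (frag_of a)" by (metis imageE)
    have ku: "Poly_Mapping.keys u \<subseteq> S" using u(1) by simp
    have "\<mu> (frag_cmul d u) = \<mu> u [^]\<^bsub>H\<^esub> d" by (rule hom_W_cmul[OF gH \<mu>hom ku])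
    also have "\<dots> = \<rho> (frag_cmul d (frag_of a))"
      using hom_W_cmul[OF gH \<rho>(1), of "frag_of a" d] aX' u(2) by (simp add: keys_frag_of)
    also have "\<dots> = \<mu> v" using \<rho>(3) \<rho>v by simp
    finally have "frag_cmul d u = v"
      using \<mu>inj ku kv keys_cmul[of d u] by (meson inj_onD carrier_free_Abelian_group_iff subset_trans)
    then have "\<nu> v = \<nu> (frag_cmul d u)" by (rule sym[THEN arg_cong])
    also have "\<dots> = \<nu> u [^]\<^bsub>G\<^esub> d" by (rule hom_W_cmul[OF gG \<nu>hom ku])
    finally have "\<nu> v = \<nu> u [^]\<^bsub>G\<^esub> d" .
    then have eqd: "g [^]\<^bsub>G\<^esub> d = \<nu> u [^]\<^bsub>G\<^esub> d" using \<nu>v by simp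
    have \<nu>u: "\<nu> u \<in> carrier G" using hom_in_carrier[OF \<nu>hom u(1)] .
    have "(g \<otimes>\<^bsub>G\<^esub> inv\<^bsub>G\<^esub> (\<nu> u)) [^]\<^bsub>G\<^esub> d = g [^]\<^bsub>G\<^esub> d \<otimes>\<^bsub>G\<^esub> inv\<^bsub>G\<^esub> (\<nu> u [^]\<^bsub>G\<^esub> d)"
      using Gg.int_pow_distrib[of g "inv\<^bsub>G\<^esub> (\<nu> u)" d] Gg.int_pow_inv[OF \<nu>u, of d] g \<nu>u by simp
    also have "\<dots> = \<one>\<^bsub>G\<^esub>" using eqd \<nu>u by simp
    finally have "g \<otimes>\<^bsub>G\<^esub> inv\<^bsub>G\<^esub> (\<nu> u) = \<one>\<^bsub>G\<^esub>" using tfG[OF _ d0] g \<nu>u by simp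
    then have "inv\<^bsub>G\<^esub> (inv\<^bsub>G\<^esub> (\<nu> u)) = g" by (rule Gg.inv_equality) (use g \<nu>u in simp_all)
    then have "\<nu> u = g" using \<nu>u by simp
    then show ?thesis using u(1) by blast
  qed

  have "\<nu> \<in> iso (W S) G"
    unfolding iso_iff
  proof (intro conjI)
    show "\<nu> \<in> hom (W S) G" by (rule \<nu>hom)
    show "\<nu> ` carrier (W S) = carrier G"
      using hom_in_carrier[OF \<nu>hom] surj\<nu> by blast
    show "inj_on \<nu> (carrier (W S))" using inj\<nu> by (meson inj_onI)
  qed
  then have "W S \<cong> G" by (rule is_isoI)
  then show ?thesis by (rule iso_trans[OF S(2)])
qed


theorem mainTheorem8:
  assumes "comm_group H" and "comm_group G"
    and "isotyped H G"
    and "free_fg H \<or> free_fg G"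
  shows "H \<cong> G"
proof -
  from assms(4) show ?thesis
  proof
    assume "free_fg H"
    then show ?thesis using main_free[OF assms(1,2,3)] by blast
  next
    assume "free_fg G"
    then have "G \<cong> H" using main_free[OF assms(2,1) isotyped_sym[OF assms(3)]] by blast
    interpret Gc: comm_group G by (rule assms(2))
    show ?thesis by (rule Gc.iso_sym[OF \<open>G \<cong> H\<close>])
  qed
qed

end
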